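(* Let $(\mathcal X,\mathcal B,\pi)$ be a measure space with $\pi$ $\sigma$-finite, $r$ measurable, and the noise stationary: $\{\varepsilon(x)\}$ a real-valued random field with $\varepsilon(x)\overset d=\varepsilon$ for all $x$ for some random variable $\varepsilon$, with i.i.d. copies independent of sampled points. Let $2\le K<\infty$. Assume: (a) $p_0$ (and a reference density $p_{\rm ref}$) in $\mathcal P_\pi$ satisfy $\int p|\log p|\,d\pi<\infty$; (b) $\mathbb E_{X\sim p}[e^{|r(X)+\varepsilon(X)|}]<\infty$ for all $p\in\mathcal P_\pi$; (c) $0<Q_*<\infty$, $Q\le Q_*$ everywhere; (d) $\int_Ap_0\,d\pi>0$ where $A=\{Q=Q_*\}$. Let $p_{t+1}=p_tH^K_{p_t}$. Then for all $t$, $\mathbb E_{X\sim p_{t+1}}Q(X)\ge\mathbb E_{X\sim p_t}Q(X)$, and $\lim_{t\to\infty}\mathbb E_{X\sim p_t}Q(X)=Q_*$.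
   Context: $\mathcal P_\pi$ = probability densities w.r.t. $\pi$. $Q(x):=e^{r(x)}\mathbb E[e^{\varepsilon(x)}]$, $Q_*:=\operatorname*{ess\,sup}_\pi Q$. $H^K_p(x):=\mathbb E\bigl[K e^{r(x)+\varepsilon(x)}/(e^{r(x)+\varepsilon(x)}+\sum_{k=1}^{K-1}e^{r(X_k)+\varepsilon_k(X_k)})\bigr]$ with $X_k$ i.i.d. with density $p$, independent of the i.i.d. noise copies. *)

theory Defs
  imports "HOL-Probability.Probability"
begin

definition is_density :: "'a measure \<Rightarrow> ('a \<Rightarrow> real) \<Rightarrow> bool" where
  "is_density M p \<longleftrightarrow> p \<in> borel_measurable M \<and> (\<forall>x\<in>space M. 0 \<le> p x)
     \<and> (\<integral>\<^sup>+ x. ennreal (p x) \<partial>M) = 1"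

text \<open>Q(x) = e^{r(x)} E[e^eps], N the (common) law of the stationary noise.\<close>
definition Qfun :: "real measure \<Rightarrow> ('a \<Rightarrow> real) \<Rightarrow> 'a \<Rightarrow> real" where
  "Qfun N r x = exp (r x) * (\<integral> e. exp e \<partial>N)"

definition Qstar :: "'a measure \<Rightarrow> real measure \<Rightarrow> ('a \<Rightarrow> real) \<Rightarrow> ereal" where
  "Qstar M N r = esssup M (\<lambda>x. ereal (Qfun N r x))"

text \<open>H^K_p(x): expectation over the own noise e0 ~ N and K-1 i.i.d. pairs (X_k, eps_k)
  with X_k ~ p dM and eps_k ~ N independent.\<close>
definition HK :: "'a measure \<Rightarrow> real measure \<Rightarrow> ('a \<Rightarrow> real) \<Rightarrow> nat \<Rightarrow> ('a \<Rightarrow> real) \<Rightarrow> 'a \<Rightarrow> real" where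
  "HK M N r K p x =
     (\<integral> z. real K * exp (r x + fst z) /
            (exp (r x + fst z) + (\<Sum>k<K - 1. exp (r (fst (snd z k)) + snd (snd z k))))
      \<partial>(N \<Otimes>\<^sub>M (\<Pi>\<^sub>M k\<in>{..<K - 1}. (density M (\<lambda>y. ennreal (p y)) \<Otimes>\<^sub>M N))))"

fun piter :: "'a measure \<Rightarrow> real measure \<Rightarrow> ('a \<Rightarrow> real) \<Rightarrow> nat \<Rightarrow> ('a \<Rightarrow> real) \<Rightarrow> nat \<Rightarrow> 'a \<Rightarrow> real" where
  "piter M N r K p0 0 = p0"
| "piter M N r K p0 (Suc t) = (\<lambda>x. piter M N r K p0 t x * HK M N r K (piter M N r K p0 t) x)"

end

theory Submission
  imports Defs
begin


locale sysK =
  fixes P :: "'a measure" and N :: "real measure" and r :: "'a \<Rightarrow> real" and n :: nat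
  assumes P: "prob_space P" and N: "prob_space N" and sN: "sets N = sets borel"
    and r_meas[measurable]: "r \<in> borel_measurable P" and n1: "1 \<le> n"
begin

lemma N_id[measurable]: "(\<lambda>x. x) \<in> borel_measurable N"
  by (subst measurable_cong_sets[OF sN refl]) simp

abbreviation "Lam \<equiv> P \<Otimes>\<^sub>M N"
abbreviation "Pin \<equiv> PiM {..<n} (\<lambda>_. Lam)"
abbreviation "W \<equiv> (\<lambda>z. exp (r (fst z) + snd z))"
abbreviation "S \<equiv> (\<lambda>zs. \<Sum>k<n. W (zs k))"
definition "phi a = (\<integral> y. real (Suc n) * (a * exp (fst y)) / (a * exp (fst y) + S (snd y)) \<partial>(N \<Otimes>\<^sub>M Pin))"

lemma Lam_prob: "prob_space Lam" using P N by (simp add: prob_space_pair)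
lemma Pin_prob: "prob_space Pin" using Lam_prob by (simp add: prob_space_PiM)
lemma NP_prob: "prob_space (N \<Otimes>\<^sub>M Pin)" using N Pin_prob by (simp add: prob_space_pair)

lemma W_meas[measurable]: "W \<in> borel_measurable Lam" by measurable
lemma S_meas[measurable]: "S \<in> borel_measurable Pin" by measurable

lemma S_pos: "0 < S zs"
  using n1 by (intro sum_pos) (auto simp: lessThan_empty_iff)

lemma F_meas[measurable]: "(\<lambda>(x, y). real (Suc n) * (exp (r x) * exp (fst y)) / (exp (r x) * exp (fst y) + S (snd y)))
   \<in> borel_measurable (P \<Otimes>\<^sub>M (N \<Otimes>\<^sub>M Pin))"
  by measurable


lemma fstN[measurable]: "fst \<in> borel_measurable (N \<Otimes>\<^sub>M X)"
  by (rule measurable_compose[OF measurable_fst N_id])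

lemma integrable_bdd:
  fixes f :: "'b \<Rightarrow> real"
  assumes "prob_space M" "f \<in> borel_measurable M" "\<And>x. x \<in> space M \<Longrightarrow> \<bar>f x\<bar> \<le> B"
  shows "integrable M f"
proof -
  interpret prob_space M by fact
  show ?thesis using assms(2,3) by (intro integrable_const_bound[where B=B]) auto
qed

lemma frac_bdd:
  fixes k :: real
  assumes "0 \<le> k" "0 \<le> a" "0 < s" "0 < u"
  shows "0 \<le> k * (a * u) / (a * u + s)" "k * (a * u) / (a * u + s) \<le> k"
proof -
  have p: "0 < a * u + s" using assms by (auto intro: add_nonneg_pos)
  then show "0 \<le> k * (a * u) / (a * u + s)" using assms by auto
  have "a * u / (a * u + s) \<le> 1" using p assms by (simp add: divide_simps)
  then show "k * (a * u) / (a * u + s) \<le> k"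
    using mult_left_mono[OF _ assms(1)] by fastforce
qed

lemma frac_mono:
  fixes k :: real
  assumes "0 \<le> k" "0 \<le> a" "a \<le> b" "0 < s" "0 < u"
  shows "k * (a * u) / (a * u + s) \<le> k * (b * u) / (b * u + s)"
proof -
  have "a * u * (b * u + s) \<le> b * u * (a * u + s)"
    using assms by (simp add: algebra_simps mult_right_mono mult_left_mono)
  moreover have "0 < a * u + s" "0 < b * u + s" using assms by (auto intro: add_nonneg_pos)
  ultimately have "a * u / (a * u + s) \<le> b * u / (b * u + s)"
    by (simp add: divide_simps)
  then show ?thesis using mult_left_mono[OF _ assms(1)] by fastforce
qed

lemma phi_meas[measurable]: "(\<lambda>y. real (Suc n) * (a * exp (fst y)) / (a * exp (fst y) + S (snd y))) \<in> borel_measurable (N \<Otimes>\<^sub>M Pin)"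
  by measurable

lemma phi_integrable:
  assumes "0 \<le> a"
  shows "integrable (N \<Otimes>\<^sub>M Pin) (\<lambda>y. real (Suc n) * (a * exp (fst y)) / (a * exp (fst y) + S (snd y)))"
proof (rule integrable_bdd[OF NP_prob phi_meas, where B="real (Suc n)"])
  fix y
  show "\<bar>real (Suc n) * (a * exp (fst y)) / (a * exp (fst y) + S (snd y))\<bar> \<le> real (Suc n)"
    using frac_bdd[OF _ assms S_pos exp_gt_zero, of "real (Suc n)"] by (simp only: abs_of_nonneg of_nat_0_le_iff)
qed

lemma phi_bdd:
  assumes "0 \<le> a" shows "0 \<le> phi a" "phi a \<le> real (Suc n)"
proof -
  interpret prob_space "N \<Otimes>\<^sub>M Pin" by (rule NP_prob)
  show "0 \<le> phi a" unfolding phi_def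
  proof (rule Bochner_Integration.integral_nonneg)
    fix y show "0 \<le> real (Suc n) * (a * exp (fst y)) / (a * exp (fst y) + S (snd y))"
      using frac_bdd[OF _ assms S_pos exp_gt_zero, of "real (Suc n)"] by (simp only: of_nat_0_le_iff)
  qed
  have "phi a \<le> (\<integral>y. real (Suc n) \<partial>(N \<Otimes>\<^sub>M Pin))" unfolding phi_def
  proof (rule integral_mono[OF phi_integrable[OF assms]])
    fix y show "real (Suc n) * (a * exp (fst y)) / (a * exp (fst y) + S (snd y)) \<le> real (Suc n)"
      using frac_bdd[OF _ assms S_pos exp_gt_zero, of "real (Suc n)"] by (simp only: of_nat_0_le_iff)
  qed simp
  then show "phi a \<le> real (Suc n)" by (simp add: prob_space)
qed

lemma phi_mono:
  assumes "0 \<le> a" "a \<le> b" shows "phi a \<le> phi b"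
  unfolding phi_def
proof (rule integral_mono[OF phi_integrable[OF assms(1)] phi_integrable])
  show "0 \<le> b" using assms by simp
  fix y show "real (Suc n) * (a * exp (fst y)) / (a * exp (fst y) + S (snd y)) \<le> real (Suc n) * (b * exp (fst y)) / (b * exp (fst y) + S (snd y))"
    by (rule frac_mono[OF _ assms S_pos exp_gt_zero]) simp
qed


abbreviation "PiS \<equiv> PiM {..<Suc n} (\<lambda>_. Lam)"
abbreviation "T \<equiv> (\<lambda>\<omega>. \<Sum>k<Suc n. W (\<omega> k))"

lemma PiS_prob: "prob_space PiS" using Lam_prob by (simp add: prob_space_PiM)

lemma T_pos: "0 < T \<omega>" by (intro sum_pos) auto

lemma Wj_meas[measurable]: "j < Suc n \<Longrightarrow> (\<lambda>\<omega>. W (\<omega> j) / T \<omega>) \<in> borel_measurable PiS"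
  by measurable

lemma Wj_int: "j < Suc n \<Longrightarrow> integrable PiS (\<lambda>\<omega>. W (\<omega> j) / T \<omega>)"
proof (rule integrable_bdd[OF PiS_prob Wj_meas, where B=1])
  fix \<omega> assume j: "j < Suc n"
  have "W (\<omega> j) \<le> T \<omega>" using j by (intro member_le_sum) auto
  then show "\<bar>W (\<omega> j) / T \<omega>\<bar> \<le> 1" using T_pos[of \<omega>] by (simp add: divide_simps)
qed

end


context sysK begin
lemma sym_j:
  assumes j: "j < Suc n"
  shows "(\<integral>\<omega>. W (\<omega> j) / T \<omega> \<partial>PiS) = (\<integral>\<omega>. W (\<omega> n) / T \<omega> \<partial>PiS)"
proof -
  define f where "f = (\<lambda>i::nat. if i = j then n else if i = n then j else i)"
  have inj: "inj_on f {..<Suc n}" unfolding f_def inj_on_def by auto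
  have fI: "f \<in> {..<Suc n} \<rightarrow> {..<Suc n}" using j unfolding f_def by auto
  have bij: "bij_betw f {..<Suc n} {..<Suc n}"
    using inj fI by (simp add: bij_betw_def inj_on_image_eq_iff endo_inj_surj Pi_iff image_subset_iff)
  have D: "distr PiS PiS (\<lambda>\<omega>. \<lambda>i\<in>{..<Suc n}. \<omega> (f i)) = PiS"
    using distr_PiM_reindex[of "{..<Suc n}" "\<lambda>_. Lam" f "{..<Suc n}", OF Lam_prob inj fI] by simp
  have mf: "(\<lambda>\<omega>. \<lambda>i\<in>{..<Suc n}. \<omega> (f i)) \<in> PiS \<rightarrow>\<^sub>M PiS"
  proof (rule measurable_restrict)
    fix i assume "i \<in> {..<Suc n}"
    then have "f i \<in> {..<Suc n}" using fI by auto
    then show "(\<lambda>\<omega>. \<omega> (f i)) \<in> PiS \<rightarrow>\<^sub>M Lam" by (rule measurable_component_singleton)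
  qed
  have "(\<integral>\<omega>. W (\<omega> n) / T \<omega> \<partial>PiS) = (\<integral>\<omega>. W (\<omega> n) / T \<omega> \<partial>distr PiS PiS (\<lambda>\<omega>. \<lambda>i\<in>{..<Suc n}. \<omega> (f i)))"
    using D by simp
  also have "\<dots> = (\<integral>\<omega>. (\<lambda>\<omega>. W (\<omega> n) / T \<omega>) (\<lambda>i\<in>{..<Suc n}. \<omega> (f i)) \<partial>PiS)"
    by (rule integral_distr[OF mf Wj_meas]) simp
  also have "\<dots> = (\<integral>\<omega>. W (\<omega> (f n)) / (\<Sum>k<Suc n. W (\<omega> (f k))) \<partial>PiS)"
  proof (rule Bochner_Integration.integral_cong[OF refl])
    fix \<omega>
    have sumeq: "(\<Sum>k<Suc n. W ((\<lambda>i\<in>{..<Suc n}. \<omega> (f i)) k)) = (\<Sum>k<Suc n. W (\<omega> (f k)))"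
      by (rule sum.cong) auto
    have e1: "(\<lambda>i\<in>{..<Suc n}. \<omega> (f i)) n = \<omega> (f n)" by simp
    then show "(\<lambda>\<omega>. W (\<omega> n) / T \<omega>) (\<lambda>i\<in>{..<Suc n}. \<omega> (f i)) = W (\<omega> (f n)) / (\<Sum>k<Suc n. W (\<omega> (f k)))"
      by (simp only: e1 sumeq)
  qed
  also have "\<dots> = (\<integral>\<omega>. W (\<omega> j) / T \<omega> \<partial>PiS)"
  proof (rule Bochner_Integration.integral_cong[OF refl])
    fix \<omega>
    have "(\<Sum>k<Suc n. W (\<omega> (f k))) = T \<omega>"
      using sum.reindex_bij_betw[OF bij, of "\<lambda>k. W (\<omega> k)"] by simp
    moreover have "f n = j" unfolding f_def by simp
    ultimately show "W (\<omega> (f n)) / (\<Sum>k<Suc n. W (\<omega> (f k))) = W (\<omega> j) / T \<omega>" by simp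
  qed
  finally show ?thesis by simp
qed

lemma sym_total: "(\<integral>\<omega>. real (Suc n) * W (\<omega> n) / T \<omega> \<partial>PiS) = 1"
proof -
  interpret prob_space PiS by (rule PiS_prob)
  have "(\<Sum>j<Suc n. (\<integral>\<omega>. W (\<omega> j) / T \<omega> \<partial>PiS)) = (\<integral>\<omega>. (\<Sum>j<Suc n. W (\<omega> j) / T \<omega>) \<partial>PiS)"
    by (rule Bochner_Integration.integral_sum[symmetric]) (rule Wj_int, simp)
  also have "\<dots> = (\<integral>\<omega>. 1 \<partial>PiS)"
  proof (rule Bochner_Integration.integral_cong[OF refl])
    fix \<omega> show "(\<Sum>j<Suc n. W (\<omega> j) / T \<omega>) = 1"
    proof -
      have "(\<Sum>j<Suc n. W (\<omega> j) / T \<omega>) = T \<omega> / T \<omega>" by (rule sum_divide_distrib[symmetric])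
      then show ?thesis using T_pos[of \<omega>] by simp
    qed
  qed
  also have "\<dots> = 1" by (simp add: prob_space)
  finally have s1: "(\<Sum>j<Suc n. (\<integral>\<omega>. W (\<omega> j) / T \<omega> \<partial>PiS)) = 1" .
  have "(\<Sum>j<Suc n. (\<integral>\<omega>. W (\<omega> j) / T \<omega> \<partial>PiS)) = (\<Sum>j<Suc n. (\<integral>\<omega>. W (\<omega> n) / T \<omega> \<partial>PiS))"
    by (rule sum.cong[OF refl]) (rule sym_j, simp)
  then have "real (Suc n) * (\<integral>\<omega>. W (\<omega> n) / T \<omega> \<partial>PiS) = 1"
    using s1 by (simp only: sum_constant card_lessThan)
  then show ?thesis by (simp add: times_divide_eq_right[symmetric] del: times_divide_eq_right)
qed



abbreviation "g \<equiv> (\<lambda>(z, zs). real (Suc n) * W z / (W z + S zs))"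

lemma g_meas[measurable]: "g \<in> borel_measurable (Lam \<Otimes>\<^sub>M Pin)" by measurable

lemma g_bdd: "0 \<le> g y" "g y \<le> real (Suc n)"
proof -
  obtain z zs where y: "y = (z, zs)" by (cases y) blast
  have "0 \<le> real (Suc n) * (1 * W z) / (1 * W z + S zs)" "real (Suc n) * (1 * W z) / (1 * W z + S zs) \<le> real (Suc n)"
    using frac_bdd[OF _ _ S_pos exp_gt_zero, of "real (Suc n)" 1] by simp_all
  then show "0 \<le> g y" "g y \<le> real (Suc n)" using y by simp_all
qed

lemma g_int: "integrable (Lam \<Otimes>\<^sub>M Pin) g"
proof (rule integrable_bdd[OF prob_space_pair[OF Lam_prob Pin_prob] g_meas, where B="real (Suc n)"])
  fix y show "\<bar>g y\<bar> \<le> real (Suc n)" using g_bdd[of y] by (simp only: abs_of_nonneg)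
qed

lemma step4: "integral\<^sup>L (Lam \<Otimes>\<^sub>M Pin) g = 1"
proof -
  have D: "distr (Lam \<Otimes>\<^sub>M Pin) PiS (\<lambda>(x, X). X(n := x)) = PiS"
    using distr_pair_PiM_eq_PiM[of "{..<n}" "\<lambda>_. Lam" n, OF Lam_prob Lam_prob]
    by (simp add: lessThan_Suc)
  have mf: "(\<lambda>(x, X). X(n := x)) \<in> (Lam \<Otimes>\<^sub>M Pin) \<rightarrow>\<^sub>M PiS"
    using measurable_fun_upd[of "{..<Suc n}" "{..<n}" n snd "Lam \<Otimes>\<^sub>M Pin" "\<lambda>_. Lam" fst]
    by (simp add: lessThan_Suc case_prod_beta')
  have m2: "(\<lambda>\<omega>. real (Suc n) * W (\<omega> n) / T \<omega>) \<in> borel_measurable PiS" by measurable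
  have "1 = (\<integral>\<omega>. real (Suc n) * W (\<omega> n) / T \<omega> \<partial>PiS)" using sym_total by simp
  also have "\<dots> = (\<integral>\<omega>. real (Suc n) * W (\<omega> n) / T \<omega> \<partial>distr (Lam \<Otimes>\<^sub>M Pin) PiS (\<lambda>(x, X). X(n := x)))"
    using D by simp
  also have "\<dots> = (\<integral>y. (\<lambda>\<omega>. real (Suc n) * W (\<omega> n) / T \<omega>) ((\<lambda>(x, X). X(n := x)) y) \<partial>(Lam \<Otimes>\<^sub>M Pin))"
    by (rule integral_distr[OF mf m2])
  also have "\<dots> = integral\<^sup>L (Lam \<Otimes>\<^sub>M Pin) g"
  proof (rule Bochner_Integration.integral_cong[OF refl])
    fix y :: "('a \<times> real) \<times> (nat \<Rightarrow> 'a \<times> real)"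
    obtain z zs where y: "y = (z, zs)" by (cases y) blast
    have "(\<Sum>k<Suc n. W ((zs(n := z)) k)) = W z + (\<Sum>k<n. W ((zs(n := z)) k))"
      by (simp only: sum.lessThan_Suc add.commute fun_upd_same)
    also have "(\<Sum>k<n. W ((zs(n := z)) k)) = S zs"
      by (rule sum.cong) auto
    finally have "(\<Sum>k<Suc n. W ((zs(n := z)) k)) = W z + S zs" .
    then show "(\<lambda>\<omega>. real (Suc n) * W (\<omega> n) / T \<omega>) ((\<lambda>(x, X). X(n := x)) y) = g y"
      using y by (simp only: prod.case fun_upd_same)
  qed
  finally show ?thesis by simp
qed

end


lemma gap_alg:
  fixes k a b u u0 s S0 D :: real
  assumes "0 \<le> k" "0 \<le> a" "a \<le> b" "0 < u0" "u0 \<le> u" "0 < S0" "S0 \<le> s" "b * u + s \<le> D"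
  shows "k * u0 * S0 * (b - a) / D^2 \<le> k * (b * u) / (b * u + s) - k * (a * u) / (a * u + s)"
proof -
  have u: "0 < u" "0 < s" using assms by auto
  have p1: "0 < b * u + s" "0 < a * u + s" using assms u by (auto intro: add_nonneg_pos)
  have eq: "k * (b * u) / (b * u + s) - k * (a * u) / (a * u + s) = (k * u * s * (b - a)) / ((b * u + s) * (a * u + s))"
    using p1 by (simp add: field_simps)
  have w: "(b * u + s) * (a * u + s) \<le> D^2"
  proof -
    have "a * u + s \<le> b * u + s" using assms u by (simp add: mult_right_mono)
    then have "(b * u + s) * (a * u + s) \<le> (b * u + s) * (b * u + s)" using p1 by (simp add: mult_left_mono)
    also have "\<dots> \<le> D * D" using assms p1 by (simp add: mult_mono)
    finally show ?thesis by (simp add: power2_eq_square)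
  qed
  have x: "k * u0 * S0 * (b - a) \<le> k * u * s * (b - a)"
  proof -
    have "u0 * S0 \<le> u * s" using assms by (simp add: mult_mono)
    then have "k * (u0 * S0) \<le> k * (u * s)" using assms by (simp add: mult_left_mono)
    then have "k * (u0 * S0) * (b - a) \<le> k * (u * s) * (b - a)" using assms by (intro mult_right_mono) auto
    then show ?thesis by (simp add: mult.assoc)
  qed
  have "k * u0 * S0 * (b - a) / D^2 \<le> (k * u * s * (b - a)) / ((b * u + s) * (a * u + s))"
    by (rule frac_le) (use assms u p1 w x in auto)
  then show ?thesis using eq by simp
qed

context sysK begin

lemma int_bdd:
  fixes f :: "'b \<Rightarrow> real"
  assumes "prob_space M" "f \<in> borel_measurable M" "\<And>x. x \<in> space M \<Longrightarrow> 0 \<le> f x" "\<And>x. x \<in> space M \<Longrightarrow> f x \<le> B"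
  shows "0 \<le> integral\<^sup>L M f" "integral\<^sup>L M f \<le> B"
proof -
  interpret prob_space M by fact
  show "0 \<le> integral\<^sup>L M f" using assms(3) by (rule Bochner_Integration.integral_nonneg)
  have int: "integrable M f"
    using assms by (intro integrable_bdd[where B=B]) (auto simp: abs_of_nonneg)
  have "integral\<^sup>L M f \<le> (\<integral>x. B \<partial>M)" using assms(4) by (intro integral_mono[OF int]) auto
  then show "integral\<^sup>L M f \<le> B" by (simp add: prob_space)
qed

abbreviation "G \<equiv> (\<lambda>z. \<integral>zs. g (z, zs) \<partial>Pin)"

lemma G_meas[measurable]: "G \<in> borel_measurable Lam"
proof -
  interpret Pi: prob_space Pin by (rule Pin_prob)
  show ?thesis by (rule Pi.borel_measurable_lebesgue_integral) simp
qed

lemma G_bdd: "0 \<le> G z" "G z \<le> real (Suc n)"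
  using int_bdd[OF Pin_prob, of "\<lambda>zs. g (z, zs)" "real (Suc n)"] g_bdd by auto

lemma norm_P: "(\<integral>x. phi (exp (r x)) \<partial>P) = 1"
proof -
  interpret NP: pair_sigma_finite N Pin
    using N Pin_prob by (simp add: pair_sigma_finite_def prob_space_imp_sigma_finite)
  interpret PN: pair_sigma_finite P N
    using N P by (simp add: pair_sigma_finite_def prob_space_imp_sigma_finite)
  interpret LP: pair_sigma_finite Lam Pin
    using Lam_prob Pin_prob by (simp add: pair_sigma_finite_def prob_space_imp_sigma_finite)
  have 1: "phi (exp (r x)) = (\<integral>e. G (x, e) \<partial>N)" for x
  proof -
    have mm: "(\<lambda>y. g ((x, fst y), snd y)) \<in> borel_measurable (N \<Otimes>\<^sub>M Pin)"
    proof -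
      have "(\<lambda>y. real (Suc n) * exp (r x + fst y) / (exp (r x + fst y) + S (snd y))) \<in> borel_measurable (N \<Otimes>\<^sub>M Pin)"
        by measurable
      moreover have "(\<lambda>y. g ((x, fst y), snd y)) = (\<lambda>y. real (Suc n) * exp (r x + fst y) / (exp (r x + fst y) + S (snd y)))"
        by auto
      ultimately show ?thesis by simp
    qed
    have ii: "integrable (N \<Otimes>\<^sub>M Pin) (\<lambda>y. g ((x, fst y), snd y))"
      proof (rule integrable_bdd[OF NP_prob mm, where B="real (Suc n)"])
      fix y :: "real \<times> (nat \<Rightarrow> 'a \<times> real)"
      show "\<bar>g ((x, fst y), snd y)\<bar> \<le> real (Suc n)" using g_bdd[of "((x, fst y), snd y)"] by (simp only: abs_of_nonneg)
    qed
    have "phi (exp (r x)) = (\<integral>y. g ((x, fst y), snd y) \<partial>(N \<Otimes>\<^sub>M Pin))"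
      unfolding phi_def by (rule Bochner_Integration.integral_cong[OF refl]) (simp add: exp_add case_prod_beta)
    also have "\<dots> = (\<integral>e. G (x, e) \<partial>N)"
      using NP.integral_fst'[OF ii] by simp
    finally show ?thesis .
  qed
  have iG: "integrable Lam G"
    proof (rule integrable_bdd[OF Lam_prob G_meas, where B="real (Suc n)"])
    fix z show "\<bar>G z\<bar> \<le> real (Suc n)" using G_bdd[of z] by (simp only: abs_of_nonneg)
  qed
  have "(\<integral>x. phi (exp (r x)) \<partial>P) = (\<integral>x. (\<integral>e. G (x, e) \<partial>N) \<partial>P)"
    by (rule Bochner_Integration.integral_cong[OF refl 1])
  also have "\<dots> = integral\<^sup>L Lam G"
    using PN.integral_fst'[OF iG] by simp
  also have "\<dots> = integral\<^sup>L (Lam \<Otimes>\<^sub>M Pin) g"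
    using LP.integral_fst'[OF g_int] by simp
  also have "\<dots> = 1" by (rule step4)
  finally show ?thesis .
qed


lemma measure_E:
  fixes R c0 :: real
  defines "A \<equiv> {x\<in>space P. r x = R}" and "I \<equiv> {-c0..c0}"
  shows "measure (N \<Otimes>\<^sub>M Pin) (I \<times> PiE {..<n} (\<lambda>_. A \<times> I)) = measure N I * (measure P A * measure N I) ^ n"
    and "I \<times> PiE {..<n} (\<lambda>_. A \<times> I) \<in> sets (N \<Otimes>\<^sub>M Pin)"
proof -
  have sA: "A \<in> sets P" unfolding A_def by measurable
  have sI: "I \<in> sets N" unfolding I_def using sN by simp
  have sAI: "A \<times> I \<in> sets Lam" using sA sI by (rule pair_measureI)
  have sPi: "PiE {..<n} (\<lambda>_. A \<times> I) \<in> sets Pin" using sAI by (intro sets_PiM_I_finite) auto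
  show "I \<times> PiE {..<n} (\<lambda>_. A \<times> I) \<in> sets (N \<Otimes>\<^sub>M Pin)" using sI sPi by (rule pair_measureI)
  interpret PS: product_sigma_finite "\<lambda>_. Lam"
    using Lam_prob by (simp add: product_sigma_finite_def prob_space_imp_sigma_finite)
  interpret PiP: prob_space Pin by (rule Pin_prob)
  interpret NN: prob_space N by (rule N)
  interpret PP: prob_space P by (rule P)
  interpret LL: prob_space Lam by (rule Lam_prob)
  interpret NP: prob_space "N \<Otimes>\<^sub>M Pin" by (rule NP_prob)
  interpret PN: pair_sigma_finite P N
    using N P by (simp add: pair_sigma_finite_def prob_space_imp_sigma_finite)
  have "emeasure (N \<Otimes>\<^sub>M Pin) (I \<times> PiE {..<n} (\<lambda>_. A \<times> I)) = emeasure N I * emeasure Pin (PiE {..<n} (\<lambda>_. A \<times> I))"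
    by (rule PiP.emeasure_pair_measure_Times[OF sI sPi])
  also have "emeasure Pin (PiE {..<n} (\<lambda>_. A \<times> I)) = (\<Prod>k<n. emeasure Lam (A \<times> I))"
    using sAI by (subst PS.emeasure_PiM) auto
  also have "emeasure Lam (A \<times> I) = emeasure P A * emeasure N I"
    by (rule NN.emeasure_pair_measure_Times[OF sA sI])
  finally have "emeasure (N \<Otimes>\<^sub>M Pin) (I \<times> PiE {..<n} (\<lambda>_. A \<times> I)) = ennreal (measure N I * (measure P A * measure N I) ^ n)"
    by (simp add: NN.emeasure_eq_measure PP.emeasure_eq_measure ennreal_mult'[symmetric] ennreal_power)
  then show "measure (N \<Otimes>\<^sub>M Pin) (I \<times> PiE {..<n} (\<lambda>_. A \<times> I)) = measure N I * (measure P A * measure N I) ^ n"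
    by (simp add: NP.emeasure_eq_measure)
qed


definition "Cg R c0 = real (Suc n) * exp (-c0) * (real n * exp (R - c0)) / (real (Suc n) * exp (R + c0))^2"

lemma Cg_pos: "0 < Cg R c0" using n1 unfolding Cg_def by auto

lemma fab_int: "0 \<le> a \<Longrightarrow> integrable (N \<Otimes>\<^sub>M Pin) (\<lambda>y. real (Suc n) * (a * exp (fst y)) / (a * exp (fst y) + S (snd y)))"
  by (rule phi_integrable)

lemma gap:
  fixes R c0 a :: real
  assumes c0: "0 \<le> c0" and a: "0 \<le> a" "a \<le> exp R"
  defines "A \<equiv> {x\<in>space P. r x = R}" and "I \<equiv> {-c0..c0}"
  shows "Cg R c0 * (exp R - a) * (measure N I * (measure P A * measure N I) ^ n) \<le> phi (exp R) - phi a"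
proof -
  define b where "b = exp R"
  define E where "E = I \<times> PiE {..<n} (\<lambda>_. A \<times> I)"
  define fa where "fa = (\<lambda>y. real (Suc n) * (a * exp (fst y)) / (a * exp (fst y) + S (snd y)))"
  define fb where "fb = (\<lambda>y. real (Suc n) * (b * exp (fst y)) / (b * exp (fst y) + S (snd y)))"
  have mE: "measure (N \<Otimes>\<^sub>M Pin) E = measure N I * (measure P A * measure N I) ^ n"
    and sE: "E \<in> sets (N \<Otimes>\<^sub>M Pin)"
    using measure_E[of c0 R] unfolding E_def A_def I_def by auto
  have ab: "a \<le> b" "0 \<le> b" using a unfolding b_def by auto
  have pw: "Cg R c0 * (b - a) * indicator E y \<le> fb y - fa y" for y
  proof (cases "y \<in> E")
    case True
    obtain e zs where y: "y = (e, zs)" by (cases y) blast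
    have e: "-c0 \<le> e" "e \<le> c0" using True y unfolding E_def I_def by auto
    have zs: "\<And>k. k < n \<Longrightarrow> zs k \<in> A \<times> I" using True y unfolding E_def by (auto simp: PiE_iff)
    have Wk: "exp (R - c0) \<le> W (zs k) \<and> W (zs k) \<le> exp (R + c0)" if k: "k < n" for k
    proof -
      have "r (fst (zs k)) = R" "-c0 \<le> snd (zs k)" "snd (zs k) \<le> c0"
        using zs[OF k] unfolding A_def I_def by auto
      then show ?thesis by simp
    qed
    have S0: "real n * exp (R - c0) \<le> S zs"
    proof -
      have "(\<Sum>k<n. exp (R - c0)) \<le> S zs" using Wk by (intro sum_mono) auto
      then show ?thesis by simp
    qed
    have S1: "S zs \<le> real n * exp (R + c0)"
    proof -
      have "S zs \<le> (\<Sum>k<n. exp (R + c0))" using Wk by (intro sum_mono) auto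
      then show ?thesis by simp
    qed
    have u0: "exp (-c0) \<le> exp e" using e by simp
    have bu: "b * exp e \<le> exp (R + c0)" unfolding b_def using e by (simp add: exp_add[symmetric])
    have D: "b * exp e + S zs \<le> real (Suc n) * exp (R + c0)"
      using bu S1 by (simp add: algebra_simps)
    have S0p: "0 < real n * exp (R - c0)" using n1 by simp
    have "real (Suc n) * exp (-c0) * (real n * exp (R - c0)) * (b - a) / (real (Suc n) * exp (R + c0))^2
        \<le> real (Suc n) * (b * exp e) / (b * exp e + S zs) - real (Suc n) * (a * exp e) / (a * exp e + S zs)"
      by (rule gap_alg[OF _ a(1) ab(1) exp_gt_zero u0 S0p S0 D]) simp
    moreover have "Cg R c0 * (b - a) = real (Suc n) * exp (-c0) * (real n * exp (R - c0)) * (b - a) / (real (Suc n) * exp (R + c0))^2"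
      unfolding Cg_def by simp
    ultimately show ?thesis using True y unfolding fa_def fb_def by simp
  next
    case False
    have "fa y \<le> fb y" unfolding fa_def fb_def
      by (rule frac_mono[OF _ a(1) ab(1) S_pos exp_gt_zero]) simp
    then show ?thesis using False by simp
  qed
  have iE: "integrable (N \<Otimes>\<^sub>M Pin) (\<lambda>y. Cg R c0 * (b - a) * indicator E y)"
    by (rule integrable_bdd[OF NP_prob, where B="\<bar>Cg R c0 * (b - a)\<bar>"]) (use sE in \<open>auto simp: indicator_def\<close>)
  have "Cg R c0 * (b - a) * measure (N \<Otimes>\<^sub>M Pin) E = (\<integral>y. Cg R c0 * (b - a) * indicator E y \<partial>(N \<Otimes>\<^sub>M Pin))"
    using sets.sets_into_space[OF sE] by (simp add: Int_absorb2)
  also have "\<dots> \<le> (\<integral>y. fb y - fa y \<partial>(N \<Otimes>\<^sub>M Pin))"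
    by (rule integral_mono[OF iE]) (use fab_int[OF a(1)] fab_int[OF ab(2)] pw in \<open>auto simp: fa_def fb_def\<close>)
  also have "\<dots> = phi b - phi a"
    unfolding phi_def fa_def fb_def by (rule Bochner_Integration.integral_diff[OF fab_int[OF ab(2)] fab_int[OF a(1)]])
  finally show ?thesis using mE unfolding b_def by simp
qed


lemma H_meas[measurable]: "(\<lambda>x. phi (exp (r x))) \<in> borel_measurable P"
proof -
  interpret NP: prob_space "N \<Otimes>\<^sub>M Pin" by (rule NP_prob)
  have "(\<lambda>x. \<integral>y. real (Suc n) * (exp (r x) * exp (fst y)) / (exp (r x) * exp (fst y) + S (snd y)) \<partial>(N \<Otimes>\<^sub>M Pin)) \<in> borel_measurable P"
    by (rule NP.borel_measurable_lebesgue_integral) (rule F_meas)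
  then show ?thesis unfolding phi_def .
qed

lemma H_bdd: "0 \<le> phi (exp (r x))" "phi (exp (r x)) \<le> real (Suc n)"
  using phi_bdd[of "exp (r x)"] by auto

lemma phiR_ge1:
  assumes rR: "\<forall>x\<in>space P. r x \<le> R"
  shows "1 \<le> phi (exp R)"
proof -
  interpret PP: prob_space P by (rule P)
  have iH: "integrable P (\<lambda>x. phi (exp (r x)))"
    by (rule integrable_bdd[OF P H_meas, where B="real (Suc n)"]) (use H_bdd in \<open>simp add: abs_of_nonneg\<close>)
  have "1 = (\<integral>x. phi (exp (r x)) \<partial>P)" using norm_P by simp
  also have "\<dots> \<le> (\<integral>x. phi (exp R) \<partial>P)"
    by (rule integral_mono[OF iH]) (use rR in \<open>auto intro!: phi_mono\<close>)
  also have "\<dots> = phi (exp R)" by (simp add: PP.prob_space)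
  finally show ?thesis .
qed

lemma mass_A:
  assumes rR: "\<forall>x\<in>space P. r x \<le> R"
  defines "A \<equiv> {x\<in>space P. r x = R}"
  shows "measure P A \<le> (\<integral>x. indicator A x * phi (exp (r x)) \<partial>P)"
proof -
  interpret PP: prob_space P by (rule P)
  have sA: "A \<in> sets P" unfolding A_def by measurable
  have i1: "integrable P (\<lambda>x. indicator A x * phi (exp (r x)))"
    by (rule integrable_bdd[OF P, where B="real (Suc n)"]) (use sA H_bdd in \<open>auto simp: indicator_def\<close>)
  have "measure P A = (\<integral>x. indicator A x \<partial>P)" using sets.sets_into_space[OF sA] by (simp add: Int_absorb2)
  also have "\<dots> \<le> (\<integral>x. indicator A x * phi (exp (r x)) \<partial>P)"
  proof (rule integral_mono[OF _ i1])
    show "integrable P (indicator A :: _ \<Rightarrow> real)" using sA by (simp add: PP.emeasure_eq_measure)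
    fix x assume "x \<in> space P"
    then show "(indicator A x :: real) \<le> indicator A x * phi (exp (r x))"
      using phiR_ge1[OF rR] unfolding A_def by (auto simp: indicator_def)
  qed
  finally show ?thesis .
qed


lemma increment:
  fixes R c c0 :: real
  assumes rR: "\<forall>x\<in>space P. r x \<le> R" and c: "0 < c" and c0: "0 \<le> c0"
  defines "A \<equiv> {x\<in>space P. r x = R}" and "I \<equiv> {-c0..c0}"
    and "\<mu> \<equiv> (\<integral>x. c * exp (r x) \<partial>P)"
  shows "\<mu> + c * Cg R c0 * (measure N I * (measure P A * measure N I) ^ n) * measure P A * (exp R - \<mu> / c)^2
     \<le> (\<integral>x. c * exp (r x) * phi (exp (r x)) \<partial>P)"
proof -
  interpret PP: prob_space P by (rule P)
  define Q where "Q = (\<lambda>x. c * exp (r x))"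
  define H where "H = (\<lambda>x. phi (exp (r x)))"
  define \<kappa> where "\<kappa> = measure N I * (measure P A * measure N I) ^ n"
  have \<kappa>0: "0 \<le> \<kappa>" unfolding \<kappa>_def by simp
  have sA: "A \<in> sets P" unfolding A_def by measurable
  have Qm[measurable]: "Q \<in> borel_measurable P" unfolding Q_def by measurable
  have Hm[measurable]: "H \<in> borel_measurable P" unfolding H_def by measurable
  have Qb: "0 \<le> Q x" "Q x \<le> c * exp R" if "x \<in> space P" for x
    using rR that c unfolding Q_def by auto
  have Hb: "0 \<le> H x" "H x \<le> real (Suc n)" for x unfolding H_def using H_bdd by auto
  have iQ: "integrable P Q"
    by (rule integrable_bdd[OF P Qm, where B="c * exp R"]) (use Qb in \<open>auto simp: abs_of_nonneg\<close>)
  have iH: "integrable P H"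
    by (rule integrable_bdd[OF P Hm, where B="real (Suc n)"]) (use Hb in \<open>auto simp: abs_of_nonneg\<close>)
  have iQH: "integrable P (\<lambda>x. Q x * H x)"
  proof (rule integrable_bdd[OF P, where B="c * exp R * real (Suc n)"])
    show "(\<lambda>x. Q x * H x) \<in> borel_measurable P" by measurable
    fix x assume x: "x \<in> space P"
    have "Q x * H x \<le> c * exp R * real (Suc n)"
      by (rule mult_mono) (use Qb[OF x] Hb[of x] c in auto)
    moreover have "0 \<le> Q x * H x" using Qb[OF x] Hb[of x] by simp
    ultimately show "\<bar>Q x * H x\<bar> \<le> c * exp R * real (Suc n)" by simp
  qed
  have mu: "\<mu> = integral\<^sup>L P Q" unfolding \<mu>_def Q_def ..
  have mub: "0 \<le> \<mu>" "\<mu> \<le> c * exp R"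
    unfolding mu using int_bdd[OF P Qm, of "c * exp R"] Qb by auto
  define a where "a = \<mu> / c"
  have a: "0 \<le> a" "a \<le> exp R" "\<mu> = c * a" using mub c unfolding a_def by (auto simp: field_simps)
  define pa where "pa = phi a"
  have nH: "integral\<^sup>L P H = 1" unfolding H_def by (rule norm_P)
  have iC: "integrable P (\<lambda>x. z)" for z :: real
    by (rule integrable_bdd[OF P, where B="\<bar>z\<bar>"]) auto
  have lin: "(\<integral>x. (Q x - \<mu>) * (H x - pa) \<partial>P) = (\<integral>x. Q x * H x \<partial>P) - \<mu>"
  proof -
    have "(\<integral>x. (Q x - \<mu>) * (H x - pa) \<partial>P) = (\<integral>x. Q x * H x - (\<mu> * H x + (pa * Q x - \<mu> * pa)) \<partial>P)"
      by (rule Bochner_Integration.integral_cong[OF refl]) (simp add: algebra_simps)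
    also have "\<dots> = (\<integral>x. Q x * H x \<partial>P) - (\<integral>x. \<mu> * H x + (pa * Q x - \<mu> * pa) \<partial>P)"
      by (rule Bochner_Integration.integral_diff[OF iQH]) (use iH iQ iC in auto)
    also have "(\<integral>x. \<mu> * H x + (pa * Q x - \<mu> * pa) \<partial>P) = (\<integral>x. \<mu> * H x \<partial>P) + (\<integral>x. pa * Q x - \<mu> * pa \<partial>P)"
      by (rule Bochner_Integration.integral_add) (use iH iQ iC in auto)+
    also have "(\<integral>x. pa * Q x - \<mu> * pa \<partial>P) = (\<integral>x. pa * Q x \<partial>P) - (\<integral>x. \<mu> * pa \<partial>P)"
      by (rule Bochner_Integration.integral_diff) (use iQ iC in auto)+
    also have "(\<integral>x. \<mu> * H x \<partial>P) = \<mu>" using nH by simp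
    also have "(\<integral>x. pa * Q x \<partial>P) = pa * \<mu>" using mu by simp
    also have "(\<integral>x. \<mu> * pa \<partial>P) = \<mu> * pa" by (simp add: PP.prob_space)
    finally show ?thesis by simp
  qed
  define K0 where "K0 = c * Cg R c0 * \<kappa> * (exp R - a)^2"
  have pw: "K0 * indicator A x \<le> (Q x - \<mu>) * (H x - pa)" if x: "x \<in> space P" for x
  proof (cases "x \<in> A")
    case True
    then have rx: "r x = R" unfolding A_def by simp
    have g: "Cg R c0 * (exp R - a) * \<kappa> \<le> phi (exp R) - pa"
      unfolding \<kappa>_def pa_def A_def I_def by (rule gap[OF c0 a(1) a(2)])
    have "K0 = (c * (exp R - a)) * (Cg R c0 * (exp R - a) * \<kappa>)"
      unfolding K0_def by (simp add: power2_eq_square algebra_simps)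
    also have "\<dots> \<le> (c * (exp R - a)) * (phi (exp R) - pa)"
      by (rule mult_left_mono[OF g]) (use c a in simp)
    also have "\<dots> = (Q x - \<mu>) * (H x - pa)" unfolding Q_def H_def rx a(3) by (simp add: algebra_simps)
    finally show ?thesis using True by simp
  next
    case False
    have "0 \<le> (Q x - \<mu>) * (H x - pa)"
    proof (cases "a \<le> exp (r x)")
      case True
      then have "pa \<le> H x" unfolding pa_def H_def by (intro phi_mono a(1))
      moreover have "\<mu> \<le> Q x" unfolding Q_def a(3) using True c by simp
      ultimately show ?thesis by simp
    next
      case False
      then have "H x \<le> pa" unfolding pa_def H_def by (intro phi_mono) auto
      moreover have "Q x \<le> \<mu>" unfolding Q_def a(3) using False c by simp
      ultimately show ?thesis by (simp add: mult_nonpos_nonpos)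
    qed
    then show ?thesis using False by simp
  qed
  have iK: "integrable P (\<lambda>x. K0 * indicator A x)"
    using sA by (intro integrable_mult_right) (simp add: PP.emeasure_eq_measure)
  have iR: "integrable P (\<lambda>x. (Q x - \<mu>) * (H x - pa))"
  proof (rule integrable_bdd[OF P, where B="(c * exp R + \<bar>\<mu>\<bar>) * (real (Suc n) + \<bar>pa\<bar>)"])
    show "(\<lambda>x. (Q x - \<mu>) * (H x - pa)) \<in> borel_measurable P" by measurable
    fix x assume x: "x \<in> space P"
    then have "\<bar>Q x - \<mu>\<bar> \<le> c * exp R + \<bar>\<mu>\<bar>" "\<bar>H x - pa\<bar> \<le> real (Suc n) + \<bar>pa\<bar>"
      using Qb[OF x] Hb[of x] by (auto simp: abs_le_iff)
    then show "\<bar>(Q x - \<mu>) * (H x - pa)\<bar> \<le> (c * exp R + \<bar>\<mu>\<bar>) * (real (Suc n) + \<bar>pa\<bar>)"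
      by (simp add: abs_mult mult_mono)
  qed
  have "K0 * measure P A = (\<integral>x. K0 * indicator A x \<partial>P)"
    using sets.sets_into_space[OF sA] by (simp add: Int_absorb2)
  also have "\<dots> \<le> (\<integral>x. (Q x - \<mu>) * (H x - pa) \<partial>P)"
    by (rule integral_mono[OF iK iR pw])
  finally have "K0 * measure P A \<le> (\<integral>x. Q x * H x \<partial>P) - \<mu>" using lin by simp
  then show ?thesis unfolding K0_def \<kappa>_def a_def Q_def H_def by (simp add: algebra_simps)
qed

end



lemma density_prob:
  assumes "is_density M p"
  shows "prob_space (density M (\<lambda>y. ennreal (p y)))"
proof (rule prob_spaceI)
  have pm: "p \<in> borel_measurable M" using assms unfolding is_density_def by auto
  have "emeasure (density M (\<lambda>y. ennreal (p y))) (space (density M (\<lambda>y. ennreal (p y)))) = (\<integral>\<^sup>+ x. ennreal (p x) * indicator (space M) x \<partial>M)"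
    using pm by (simp add: emeasure_density)
  also have "\<dots> = (\<integral>\<^sup>+ x. ennreal (p x) \<partial>M)"
    by (rule nn_integral_cong) simp
  also have "\<dots> = 1" using assms unfolding is_density_def by auto
  finally show "emeasure (density M (\<lambda>y. ennreal (p y))) (space (density M (\<lambda>y. ennreal (p y)))) = 1" .
qed

lemma density_sysK:
  assumes "is_density M p" "r \<in> borel_measurable M" "prob_space N" "sets N = sets borel" "1 \<le> n"
  shows "sysK (density M (\<lambda>y. ennreal (p y))) N r n"
proof -
  have 1: "prob_space (density M (\<lambda>y. ennreal (p y)))" by (rule density_prob[OF assms(1)])
  have 2: "r \<in> borel_measurable (density M (\<lambda>y. ennreal (p y)))"
    using assms(2) by (simp add: measurable_cong_sets[OF sets_density refl])
  show ?thesis using 1 2 assms by (simp add: sysK_def)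
qed

lemma HK_eq:
  assumes "sysK (density M (\<lambda>y. ennreal (p y))) N r n"
  shows "HK M N r (Suc n) p x = sysK.phi (density M (\<lambda>y. ennreal (p y))) N r n (exp (r x))"
  unfolding HK_def sysK.phi_def[OF assms] diff_Suc_1
  by (rule Bochner_Integration.integral_cong[OF refl]) (simp add: exp_add)

lemma seq_lim:
  fixes \<mu> :: "nat \<Rightarrow> real"
  assumes b: "\<And>t. \<mu> t \<le> B" and inc: "\<And>t. \<mu> t + d * (B - \<mu> t)^2 \<le> \<mu> (Suc t)" and d: "0 < d"
  shows "\<mu> \<longlonglongrightarrow> B"
proof -
  have "incseq \<mu>"
  proof (rule incseq_SucI)
    fix t show "\<mu> t \<le> \<mu> (Suc t)" using inc[of t] d by (smt (verit) zero_le_power2 mult_nonneg_nonneg)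
  qed
  then obtain L where L: "\<mu> \<longlonglongrightarrow> L" "\<forall>i. \<mu> i \<le> L" using b incseq_convergent by blast
  have LB: "L \<le> B" using L(1) b by (intro LIMSEQ_le_const2) auto
  have "(\<lambda>t. \<mu> t + d * (B - \<mu> t)^2) \<longlonglongrightarrow> L + d * (B - L)^2"
    by (intro tendsto_intros L(1))
  moreover have "(\<lambda>t. \<mu> (Suc t)) \<longlonglongrightarrow> L" using L(1) by (rule LIMSEQ_Suc)
  ultimately have "L + d * (B - L)^2 \<le> L" using inc by (intro LIMSEQ_le) auto
  then have "d * (B - L)^2 \<le> 0" by simp
  then have "(B - L)^2 \<le> 0" using d by (simp add: mult_le_0_iff)
  then have "L = B" by simp
  then show ?thesis using L(1) by simp
qed

lemma exists_c0:
  assumes "prob_space N" "sets N = sets borel"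
  shows "\<exists>c0::real. 0 \<le> c0 \<and> 0 < measure N {-c0..c0}"
proof (rule ccontr)
  interpret NN: prob_space N by fact
  assume "\<not> ?thesis"
  then have z: "measure N {-real k..real k} = 0" for k
    by (metis measure_nonneg of_nat_0_le_iff order_le_less)
  have "emeasure N (\<Union>k. {-real k..real k}) = 0"
    by (rule emeasure_UN_eq_0) (use z assms(2) in \<open>auto simp: NN.emeasure_eq_measure\<close>)
  moreover have "(\<Union>k. {-real k..real k}) = space N"
  proof -
    have "space N = UNIV" using sets_eq_imp_space_eq[OF assms(2)] by simp
    moreover have "x \<in> (\<Union>k. {-real k..real k})" for x :: real
    proof -
      obtain k where "\<bar>x\<bar> \<le> real k" using real_arch_simple by blast
      then show ?thesis by (intro UN_I[of k]) (auto simp: abs_le_iff)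
    qed
    ultimately show ?thesis by auto
  qed
  ultimately show False using NN.emeasure_space_1 by simp
qed


lemma one_step:
  fixes M :: "'a measure" and N :: "real measure" and q :: "'a \<Rightarrow> real" and R c c0 :: real
  assumes q: "is_density M q" and r[measurable]: "r \<in> borel_measurable M" and N: "prob_space N"
    and sN: "sets N = sets borel" and n1: "1 \<le> n"
    and rR: "\<forall>x\<in>space M. r x \<le> R" and c: "0 < c" and c0: "0 \<le> c0"
  defines "A \<equiv> {x\<in>space M. r x = R}" and "I \<equiv> {-c0..c0}"
    and "P \<equiv> density M (\<lambda>y. ennreal (q y))"
    and "q' \<equiv> (\<lambda>x. q x * HK M N r (Suc n) q x)"
  shows "is_density M q'"
    and "measure P A \<le> measure (density M (\<lambda>y. ennreal (q' y))) A"
    and "(\<integral>x. q x * (c * exp (r x)) \<partial>M) + c * (real (Suc n) * exp (-c0) * (real n * exp (R - c0)) / (real (Suc n) * exp (R + c0))^2)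
           * (measure N I * (measure P A * measure N I) ^ n) * measure P A
           * (exp R - (\<integral>x. q x * (c * exp (r x)) \<partial>M) / c)^2
         \<le> (\<integral>x. q' x * (c * exp (r x)) \<partial>M)"
    and "(\<integral>x. q x * (c * exp (r x)) \<partial>M) \<le> c * exp R"
proof -
  have sys: "sysK P N r n" unfolding P_def by (rule density_sysK[OF q r N sN n1])
  interpret S: sysK P N r n by (rule sys)
  have qm[measurable]: "q \<in> borel_measurable M" and q0: "\<And>x. x \<in> space M \<Longrightarrow> 0 \<le> q x"
    and q1: "(\<integral>\<^sup>+ x. ennreal (q x) \<partial>M) = 1"
    using q unfolding is_density_def by auto
  have spP: "space P = space M" and sP: "sets P = sets M" unfolding P_def by auto
  define H where "H = (\<lambda>x. S.phi (exp (r x)))"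
  have HK: "HK M N r (Suc n) q x = H x" for x unfolding H_def P_def
    by (rule HK_eq[OF sys[unfolded P_def]])
  have q'H: "q' = (\<lambda>x. q x * H x)" unfolding q'_def HK by simp
  have HmP: "H \<in> borel_measurable P" unfolding H_def by (rule S.H_meas)
  have Hm[measurable]: "H \<in> borel_measurable M" using HmP by (simp add: measurable_cong_sets[OF sP refl])
  have Hb: "0 \<le> H x" "H x \<le> real (Suc n)" for x unfolding H_def using S.H_bdd by auto
  have iH: "integrable P H"
    by (rule S.integrable_bdd[OF S.P HmP, where B="real (Suc n)"]) (use Hb in \<open>simp add: abs_of_nonneg\<close>)
  have nH: "integral\<^sup>L P H = 1" unfolding H_def by (rule S.norm_P)
  show "is_density M q'"
    unfolding is_density_def
  proof (intro conjI ballI)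
    show "q' \<in> borel_measurable M" unfolding q'H by measurable
    fix x assume "x \<in> space M" then show "0 \<le> q' x" unfolding q'H using q0 Hb by simp
  next
    have "(\<integral>\<^sup>+ x. ennreal (q' x) \<partial>M) = (\<integral>\<^sup>+ x. ennreal (q x) * ennreal (H x) \<partial>M)"
      unfolding q'H by (rule nn_integral_cong) (use q0 Hb in \<open>simp add: ennreal_mult\<close>)
    also have "\<dots> = (\<integral>\<^sup>+ x. ennreal (H x) \<partial>P)"
      unfolding P_def by (rule nn_integral_density[symmetric]) measurable
    also have "\<dots> = ennreal (integral\<^sup>L P H)"
      by (rule nn_integral_eq_integral[OF iH]) (simp add: Hb)
    finally show "(\<integral>\<^sup>+ x. ennreal (q' x) \<partial>M) = 1" using nH by simp
  qed
  have sA: "A \<in> sets M" unfolding A_def by measurable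
  have AP: "A = {x\<in>space P. r x = R}" unfolding A_def spP ..
  have rRP: "\<forall>x\<in>space P. r x \<le> R" using rR spP by simp
  have "measure P A \<le> (\<integral>x. indicator A x * H x \<partial>P)"
    unfolding AP H_def by (rule S.mass_A[OF rRP])
  also have "\<dots> = (\<integral>x. q x *\<^sub>R (indicator A x * H x) \<partial>M)"
    unfolding P_def by (rule integral_density) (use q0 in \<open>auto intro!: borel_measurable_times borel_measurable_indicator[OF sA] Hm\<close>)
  also have "\<dots> = (\<integral>x. q' x *\<^sub>R indicator A x \<partial>M)"
    unfolding q'H by (rule Bochner_Integration.integral_cong) (auto simp: algebra_simps)
  also have "\<dots> = integral\<^sup>L (density M (\<lambda>y. ennreal (q' y))) (indicator A)"
    by (rule integral_density[symmetric]) (auto simp: q'H q0 Hb intro!: borel_measurable_indicator[OF sA])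
  also have "\<dots> = measure (density M (\<lambda>y. ennreal (q' y))) A"
    using sets.sets_into_space[OF sA] by (simp add: Int_absorb2)
  finally show "measure P A \<le> measure (density M (\<lambda>y. ennreal (q' y))) A" .
  have mu: "(\<integral>x. q x * (c * exp (r x)) \<partial>M) = (\<integral>x. c * exp (r x) \<partial>P)"
    unfolding P_def by (subst integral_density) (use q0 in auto)
  have mQH: "(\<lambda>x. c * exp (r x) * H x) \<in> borel_measurable M" by measurable
  have "(\<integral>x. c * exp (r x) * H x \<partial>P) = (\<integral>x. q x *\<^sub>R (c * exp (r x) * H x) \<partial>M)"
    unfolding P_def by (rule integral_density[OF mQH qm]) (use q0 in auto)
  also have "\<dots> = (\<integral>x. q' x * (c * exp (r x)) \<partial>M)"
    by (rule Bochner_Integration.integral_cong) (auto simp: q'H algebra_simps)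
  finally have mu': "(\<integral>x. q' x * (c * exp (r x)) \<partial>M) = (\<integral>x. c * exp (r x) * S.phi (exp (r x)) \<partial>P)"
    unfolding H_def by simp
  show "(\<integral>x. q x * (c * exp (r x)) \<partial>M) + c * (real (Suc n) * exp (-c0) * (real n * exp (R - c0)) / (real (Suc n) * exp (R + c0))^2)
           * (measure N I * (measure P A * measure N I) ^ n) * measure P A
           * (exp R - (\<integral>x. q x * (c * exp (r x)) \<partial>M) / c)^2
         \<le> (\<integral>x. q' x * (c * exp (r x)) \<partial>M)"
    unfolding mu mu' AP I_def using S.increment[OF rRP c c0] by (simp add: S.Cg_def)
  have "(\<integral>x. c * exp (r x) \<partial>P) \<le> c * exp R"
    by (rule S.int_bdd(2)[OF S.P]) (use rRP c in auto)
  then show "(\<integral>x. q x * (c * exp (r x)) \<partial>M) \<le> c * exp R" using mu by simp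
qed

theorem lemma3:
  fixes M :: "'a measure" and N :: "real measure" and r :: "'a \<Rightarrow> real"
    and K :: nat and p0 pref :: "'a \<Rightarrow> real"
  assumes "sigma_finite_measure M"
    and "r \<in> borel_measurable M"
    and "prob_space N" and "sets N = sets borel"
    and "2 \<le> K"
    and "is_density M p0" and "is_density M pref"
    and "integrable M (\<lambda>x. p0 x * \<bar>ln (p0 x)\<bar>)"
    and "integrable M (\<lambda>x. pref x * \<bar>ln (pref x)\<bar>)"
    and "\<And>p. is_density M p \<Longrightarrow>
           (\<integral>\<^sup>+ z. ennreal (exp \<bar>r (fst z) + snd z\<bar>)
              \<partial>(density M (\<lambda>y. ennreal (p y)) \<Otimes>\<^sub>M N)) < \<infinity>"
    and "0 < Qstar M N r" and "Qstar M N r < \<infinity>"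
    and "\<And>x. x \<in> space M \<Longrightarrow> ereal (Qfun N r x) \<le> Qstar M N r"
    and "(\<integral>\<^sup>+ x \<in> {x \<in> space M. ereal (Qfun N r x) = Qstar M N r}. ennreal (p0 x) \<partial>M) > 0"
  shows "(\<forall>t. (\<integral> x. piter M N r K p0 (Suc t) x * Qfun N r x \<partial>M)
              \<ge> (\<integral> x. piter M N r K p0 t x * Qfun N r x \<partial>M))
       \<and> ((\<lambda>t. ereal (\<integral> x. piter M N r K p0 t x * Qfun N r x \<partial>M)) \<longlonglongrightarrow> Qstar M N r)"
proof -
  note r[measurable] = assms(2)
  define n where "n = K - 1"
  have K: "K = Suc n" and n1: "1 \<le> n" using assms(5) unfolding n_def by auto
  define c where "c = (\<integral>e. exp e \<partial>N)"
  have Qf: "Qfun N r x = c * exp (r x)" for x unfolding Qfun_def c_def by simp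
  define Aq where "Aq = {x \<in> space M. ereal (Qfun N r x) = Qstar M N r}"
  have "Aq \<noteq> {}"
  proof
    assume "Aq = {}"
    then show False using assms(14) unfolding Aq_def by simp
  qed
  then obtain x0 where x0: "x0 \<in> space M" "ereal (Qfun N r x0) = Qstar M N r" unfolding Aq_def by auto
  define R where "R = r x0"
  have Qs: "Qstar M N r = ereal (c * exp R)" using x0 Qf unfolding R_def by simp
  have c: "0 < c"
  proof -
    have "0 < c * exp R" using assms(11) Qs by simp
    then show ?thesis by (simp add: zero_less_mult_iff)
  qed
  have rR: "\<forall>x\<in>space M. r x \<le> R"
  proof
    fix x assume x: "x \<in> space M"
    have "c * exp (r x) \<le> c * exp R" using assms(13)[OF x] Qs Qf by simp
    then show "r x \<le> R" using c by simp
  qed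
  define A where "A = {x\<in>space M. r x = R}"
  have AqA: "Aq = A" unfolding Aq_def A_def Qs Qf using c by auto
  have sA: "A \<in> sets M" unfolding A_def by measurable
  obtain c0 where c0: "0 \<le> c0" "0 < measure N {-c0..c0}" using exists_c0[OF assms(3,4)] by blast
  define qI where "qI = measure N {-c0..c0}"
  define p where "p t = piter M N r K p0 t" for t
  define Pt where "Pt t = density M (\<lambda>y. ennreal (p t y))" for t
  have pS: "p (Suc t) = (\<lambda>x. p t x * HK M N r (Suc n) (p t) x)" for t
    unfolding p_def K by simp
  define \<mu> where "\<mu> t = (\<integral>x. p t x * (c * exp (r x)) \<partial>M)" for t
  have mu_eq: "(\<integral>x. piter M N r K p0 t x * Qfun N r x \<partial>M) = \<mu> t" for t
    unfolding \<mu>_def p_def Qf ..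
  define Cx where "Cx = real (Suc n) * exp (-c0) * (real n * exp (R - c0)) / (real (Suc n) * exp (R + c0))^2"
  have Cx: "0 < Cx" unfolding Cx_def using n1 by simp
  define m0 where "m0 = measure (Pt 0) A"
  have m0: "0 < m0"
  proof -
    interpret PP: prob_space "Pt 0" unfolding Pt_def p_def using density_prob[OF assms(6)] by simp
    have pm: "p0 \<in> borel_measurable M" using assms(6) unfolding is_density_def by auto
    have "emeasure (Pt 0) A = (\<integral>\<^sup>+ x. ennreal (p0 x) * indicator A x \<partial>M)"
      unfolding Pt_def p_def using pm sA by (simp add: emeasure_density)
    also have "\<dots> > 0" using assms(14) AqA unfolding Aq_def by (simp add: mult.commute)
    finally have "0 < emeasure (Pt 0) A" .
    then show ?thesis unfolding m0_def by (simp add: PP.emeasure_eq_measure)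
  qed
  have inv: "is_density M (p t) \<and> m0 \<le> measure (Pt t) A" for t
  proof (induction t)
    case 0
    then show ?case using assms(6) unfolding m0_def p_def by simp
  next
    case (Suc t)
    then have d: "is_density M (p t)" and m: "m0 \<le> measure (Pt t) A" by auto
    note os = one_step[OF d r assms(3,4) n1 rR c c0(1)]
    show ?case
    proof
      show "is_density M (p (Suc t))" unfolding pS using os(1) .
      show "m0 \<le> measure (Pt (Suc t)) A" using m os(2) unfolding Pt_def pS A_def by simp
    qed
  qed
  have mub: "\<mu> t \<le> c * exp R" for t
    unfolding \<mu>_def using one_step(4)[OF conjunct1[OF inv] r assms(3,4) n1 rR c c0(1)] .
  define d where "d = Cx * (qI * (m0 * qI) ^ n) * m0 / c"
  have d: "0 < d" unfolding d_def using Cx c0 m0 c unfolding qI_def by simp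
  have inc: "\<mu> t + d * (c * exp R - \<mu> t)^2 \<le> \<mu> (Suc t)" for t
  proof -
    have m: "m0 \<le> measure (Pt t) A" using inv by auto
    have os: "\<mu> t + c * Cx * (qI * (measure (Pt t) A * qI) ^ n) * measure (Pt t) A * (exp R - \<mu> t / c)^2 \<le> \<mu> (Suc t)"
      using one_step(3)[OF conjunct1[OF inv] r assms(3,4) n1 rR c c0(1)]
      unfolding \<mu>_def Pt_def pS Cx_def qI_def A_def by simp
    have "qI * (m0 * qI) ^ n * m0 \<le> qI * (measure (Pt t) A * qI) ^ n * measure (Pt t) A"
    proof -
      have q0: "0 \<le> qI" unfolding qI_def by simp
      have "m0 * qI \<le> measure (Pt t) A * qI" using m q0 by (simp add: mult_right_mono)
      then have a1: "(m0 * qI) ^ n \<le> (measure (Pt t) A * qI) ^ n" using m0 q0 by (intro power_mono) auto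
      have a2: "qI * (m0 * qI) ^ n \<le> qI * (measure (Pt t) A * qI) ^ n" by (rule mult_left_mono[OF a1 q0])
      show ?thesis by (rule mult_mono[OF a2 m]) (use q0 m0 in auto)
    qed
    then have "Cx * (qI * (m0 * qI) ^ n * m0) * (c * exp R - \<mu> t)^2 / c
        \<le> Cx * (qI * (measure (Pt t) A * qI) ^ n * measure (Pt t) A) * (c * exp R - \<mu> t)^2 / c"
      using Cx c by (intro divide_right_mono mult_right_mono mult_left_mono) auto
    also have "\<dots> = c * Cx * (qI * (measure (Pt t) A * qI) ^ n) * measure (Pt t) A * (exp R - \<mu> t / c)^2"
      using c by (simp add: power2_eq_square field_simps)
    finally show ?thesis using os unfolding d_def by (simp add: algebra_simps)
  qed
  have lim: "\<mu> \<longlonglongrightarrow> c * exp R" by (rule seq_lim[of \<mu> "c * exp R" d, OF mub inc d])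
  show ?thesis
  proof
    show "\<forall>t. (\<integral>x. piter M N r K p0 (Suc t) x * Qfun N r x \<partial>M) \<ge> (\<integral>x. piter M N r K p0 t x * Qfun N r x \<partial>M)"
    proof
      fix t show "(\<integral>x. piter M N r K p0 (Suc t) x * Qfun N r x \<partial>M) \<ge> (\<integral>x. piter M N r K p0 t x * Qfun N r x \<partial>M)"
        unfolding mu_eq using inc[of t] d by (smt (verit) zero_le_power2 mult_nonneg_nonneg)
    qed
    show "(\<lambda>t. ereal (\<integral>x. piter M N r K p0 t x * Qfun N r x \<partial>M)) \<longlonglongrightarrow> Qstar M N r"
      unfolding mu_eq Qs using lim by (rule tendsto_ereal)
  qed
qed


end
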